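(* Let $X\in L^\infty$ and let $\mathcal{G}\subseteq\mathcal{F}$ be a sub-$\sigma$-field. A random variable $Y$ belongs to $\mathbb{E}[X\mid\mathcal{G}]$ if and only if $Y\in L^\infty(\mathcal{G})$ and $|X-Y|\le\varepsilon(X,\mathcal{G})$ a.s.
   Context: $\mathbb{K}$ is a local field with non-archimedean absolute value $|\cdot|$. $(\Omega,\mathcal{F},\mathbb{P})$ is a probability space; $L^\infty$ is the space of $\mathbb{K}$-valued random variables $X$ with $\operatorname{ess\,sup}|X|<\infty$; $L^\infty(\mathcal{G})$ its $\mathcal{G}$-measurable subspace. For a non-negative real random variable $S$, $\operatorname{ess\,sup}\{S\mid\mathcal{G}\}:=\sup_{p\ge1}\mathbb{E}[S^p\mid\mathcal{G}]^{1/p}$ (usual real conditional expectation), $\|X\|_\mathcal{G}:=\operatorname{ess\,sup}\{|X|\mid\mathcal{G}\}$, and $\mathbb{E}[X\mid\mathcal{G}]:=\{Y\in L^\infty(\mathcal{G}): \|X-Y\|_\mathcal{G}\le\|X-Z\|_\mathcal{G}\text{ a.s. for all }Z\in L^\infty(\mathcal{G})\}$. This set is non-empty, and $\|X-Y\|_\mathcal{G}$ is a.s. the same for all $Y\in\mathbb{E}[X\mid\mathcal{G}]$; this common random variable is denoted $\varepsilon(X,\mathcal{G})$. *)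

theory Defs
  imports "HOL-Probability.Probability"
begin

definition local_field_abs :: "('k::{field,metric_space} \<Rightarrow> real) \<Rightarrow> bool" where
  "local_field_abs nabs \<longleftrightarrow>
     (\<forall>x. 0 \<le> nabs x) \<and> (\<forall>x. nabs x = 0 \<longleftrightarrow> x = 0) \<and>
     (\<forall>x y. nabs (x * y) = nabs x * nabs y) \<and>
     (\<forall>x y. nabs (x + y) \<le> max (nabs x) (nabs y)) \<and>
     (\<exists>x::'k. nabs x \<noteq> 0 \<and> nabs x \<noteq> 1) \<and>
     (\<forall>x y. dist x y = nabs (x - y)) \<and>
     (\<forall>x::'k. \<exists>r::real>0. compact (cball x r))"

definition Linf :: "'w measure \<Rightarrow> ('k::{field,metric_space} \<Rightarrow> real) \<Rightarrow> 'w measure \<Rightarrow> ('w \<Rightarrow> 'k) set" where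
  "Linf M nabs G = {X. X \<in> borel_measurable G \<and> (\<exists>C. AE w in M. nabs (X w) \<le> C)}"

definition ess_sup_cond :: "'w measure \<Rightarrow> 'w measure \<Rightarrow> ('w \<Rightarrow> real) \<Rightarrow> 'w \<Rightarrow> real" where
  "ess_sup_cond M G S = (\<lambda>w. SUP p\<in>{1::nat..}. (real_cond_exp M G (\<lambda>v. S v ^ p) w) powr (1 / real p))"

definition normG :: "'w measure \<Rightarrow> ('k::{field,metric_space} \<Rightarrow> real) \<Rightarrow> 'w measure \<Rightarrow> ('w \<Rightarrow> 'k) \<Rightarrow> 'w \<Rightarrow> real" where
  "normG M nabs G X = ess_sup_cond M G (\<lambda>w. nabs (X w))"

definition condE :: "'w measure \<Rightarrow> ('k::{field,metric_space} \<Rightarrow> real) \<Rightarrow> ('w \<Rightarrow> 'k) \<Rightarrow> 'w measure \<Rightarrow> ('w \<Rightarrow> 'k) set" where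
  "condE M nabs X G = {Y. Y \<in> Linf M nabs G \<and>
      (\<forall>Z \<in> Linf M nabs G. AE w in M.
         normG M nabs G (\<lambda>v. X v - Y v) w \<le> normG M nabs G (\<lambda>v. X v - Z v) w)}"

text \<open>\<open>\<epsilon>(X,G)\<close>: the common value of \<open>\<parallel>X - Y\<parallel>_G\<close> for \<open>Y \<in> E[X|G]\<close>.\<close>
definition eps_cond :: "'w measure \<Rightarrow> ('k::{field,metric_space} \<Rightarrow> real) \<Rightarrow> ('w \<Rightarrow> 'k) \<Rightarrow> 'w measure \<Rightarrow> 'w \<Rightarrow> real" where
  "eps_cond M nabs X G = normG M nabs G (\<lambda>v. X v - (SOME Y. Y \<in> condE M nabs X G) v)"

end

theory Submission
  imports Defs
begin


locale nafield =
  fixes nabs :: "'k::{field,metric_space} \<Rightarrow> real"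
  assumes lf: "local_field_abs nabs"
begin

lemma nonneg[simp]: "0 \<le> nabs x" using lf unfolding local_field_abs_def by blast
lemma zero_iff[simp]: "nabs x = 0 \<longleftrightarrow> x = 0" using lf unfolding local_field_abs_def by blast
lemma nabs_zero[simp]: "nabs 0 = 0" using zero_iff by blast
lemma mult: "nabs (x * y) = nabs x * nabs y" using lf unfolding local_field_abs_def by blast
lemma ultra: "nabs (x + y) \<le> max (nabs x) (nabs y)" using lf unfolding local_field_abs_def by blast
lemma dist_eq: "dist x y = nabs (x - y)" using lf unfolding local_field_abs_def by blast
lemma loc_compact: "\<exists>r>0. compact (cball (x::'k) r)" using lf unfolding local_field_abs_def by blast
lemma nontriv: "\<exists>x::'k. nabs x \<noteq> 0 \<and> nabs x \<noteq> 1" using lf unfolding local_field_abs_def by blast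

lemma nabs_one[simp]: "nabs 1 = 1"
proof -
  have "nabs 1 = nabs 1 * nabs 1" using mult[of 1 1] by simp
  moreover have "nabs 1 \<noteq> 0" by simp
  ultimately show ?thesis by (metis mult_cancel_left2)
qed

lemma nabs_minus_one: "nabs (-1) = 1"
proof -
  have "nabs (-1) * nabs (-1) = 1" using mult[of "-1" "-1"] by simp
  moreover have "0 \<le> nabs (-1)" by simp
  ultimately show ?thesis
    by (metis abs_of_nonneg abs_mult_self_eq nabs_one power2_eq_square real_sqrt_abs real_sqrt_one)
qed

lemma nabs_uminus[simp]: "nabs (- x) = nabs x"
  using mult[of "-1" x] nabs_minus_one by simp

lemma nabs_diff_comm: "nabs (x - y) = nabs (y - x)"
  by (metis minus_diff_eq nabs_uminus)

lemma ultra_diff: "nabs (x - z) \<le> max (nabs (x - y)) (nabs (y - z))"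
  using ultra[of "x - y" "y - z"] by simp

lemma nabs_dist0: "nabs x = dist x 0" by (simp add: dist_eq)

lemma ultra_sub: "nabs (x - y) \<le> max (nabs x) (nabs y)"
  using ultra[of x "- y"] by simp

lemma nabs_le_max: "nabs y \<le> max (nabs x) (nabs (x - y))"
  using ultra[of x "y - x"] nabs_diff_comm[of x y] by simp

lemma ultra_eq: assumes "nabs y < nabs x" shows "nabs (x - y) = nabs x"
proof -
  have "nabs (x - y) \<le> nabs x" using ultra_sub[of x y] assms by simp
  moreover have "nabs x \<le> max (nabs (x - y)) (nabs y)" using ultra[of "x - y" y] by simp
  ultimately show ?thesis using assms by linarith
qed

lemma nabs_inverse: "nabs (inverse x) = inverse (nabs x)"
proof (cases "x = 0")
  case False
  then have h: "nabs x * nabs (inverse x) = 1" using mult[of x "inverse x"] by simp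
  then show ?thesis using inverse_unique[OF h] by simp
qed simp

lemma exists_big: "\<exists>a::'k. 1 < nabs a"
proof -
  obtain x :: 'k where x: "nabs x \<noteq> 0" "nabs x \<noteq> 1" using nontriv by blast
  show ?thesis
  proof (cases "1 < nabs x")
    case False
    then have "nabs x < 1" "0 < nabs x" using x nonneg[of x] by linarith+
    then have "1 < nabs (inverse x)" by (simp add: nabs_inverse one_less_inverse)
    then show ?thesis by blast
  qed blast
qed

lemma nabs_power: "nabs (a ^ n) = nabs a ^ n"
  by (induction n) (simp_all add: mult)

lemma compact_cball0: "compact (cball (0::'k) R)"
proof -
  obtain r where r: "r > 0" "compact (cball (0::'k) r)" using loc_compact by blast
  obtain a :: 'k where a: "1 < nabs a" using exists_big by blast
  obtain n where n: "R / r < nabs a ^ n" using real_arch_pow[OF a] by blast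
  define c where "c = a ^ n"
  have "0 < nabs a ^ n" using a by simp
  then have c0: "0 < nabs c" by (simp only: c_def nabs_power)
  have Rc: "R \<le> nabs c * r" using n r(1) unfolding c_def nabs_power by (simp add: field_simps)
  have cont: "continuous_on UNIV (\<lambda>x. c * x)"
    unfolding continuous_on_iff
  proof (intro ballI allI impI)
    fix x e :: real
    fix x :: 'k
    assume "0 < e"
    show "\<exists>d>0. \<forall>x'\<in>UNIV. dist x' x < d \<longrightarrow> dist (c * x') (c * x) < e"
    proof (intro exI[of _ "e / nabs c"] conjI ballI impI)
      show "0 < e / nabs c" using \<open>0 < e\<close> c0 by simp
      fix x' assume "dist x' x < e / nabs c"
      then have "nabs c * dist x' x < e" using c0 by (simp add: field_simps)
      then show "dist (c * x') (c * x) < e"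
        by (simp add: dist_eq mult right_diff_distrib[symmetric])
    qed
  qed
  have img: "compact ((\<lambda>x. c * x) ` cball 0 r)"
    using compact_continuous_image[OF continuous_on_subset[OF cont] r(2)] by simp
  have sub: "cball 0 R \<subseteq> (\<lambda>x. c * x) ` cball 0 r"
  proof
    fix y :: 'k assume "y \<in> cball 0 R"
    then have y: "nabs y \<le> R" by (simp add: dist_eq)
    have "c \<noteq> 0" using c0 by auto
    have "nabs (inverse c * y) = nabs y / nabs c" by (simp add: mult nabs_inverse divide_inverse)
    also have "\<dots> \<le> r" using y Rc c0 by (simp add: field_simps)
    finally have "nabs (inverse c * y) \<le> r" .
    then have "inverse c * y \<in> cball 0 r" by (simp add: dist_eq)
    moreover have "y = c * (inverse c * y)" using \<open>c \<noteq> 0\<close> by simp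
    ultimately show "y \<in> (\<lambda>x. c * x) ` cball 0 r" by blast
  qed
  have "cball 0 R = ((\<lambda>x. c * x) ` cball 0 r) \<inter> cball 0 R" using sub by blast
  then show ?thesis using compact_Int_closed[OF img closed_cball, of 0 R] by simp
qed

lemma cauchy_conv: assumes "Cauchy (f :: nat \<Rightarrow> 'k)" shows "\<exists>l. f \<longlonglongrightarrow> l"
proof -
  obtain e x where "range f \<subseteq> cball x e" using cauchy_imp_bounded[OF assms] bounded_subset_cball by blast
  moreover have "cball x e \<subseteq> cball 0 (dist 0 x + e)"
  proof
    fix y assume "y \<in> cball x e"
    then have "dist x y \<le> e" by simp
    then show "y \<in> cball 0 (dist 0 x + e)" using dist_triangle[of 0 y x] by simp
  qed
  ultimately obtain R where R: "range f \<subseteq> cball 0 R" by blast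
  have "Topological_Spaces.complete (cball (0::'k) R)" by (rule compact_imp_complete[OF compact_cball0])
  then show ?thesis using R assms unfolding complete_def by blast
qed

lemma dense_countable: "\<exists>D::'k set. countable D \<and> (\<forall>x e. 0 < e \<longrightarrow> (\<exists>d\<in>D. dist x d < e))"
proof -
  have "\<forall>n::nat. \<forall>j::nat. \<exists>k. finite k \<and> cball (0::'k) (real n) \<subseteq> (\<Union>x\<in>k. ball x (1 / Suc j))"
    using compact_eq_totally_bounded[THEN iffD1, OF compact_cball0] by simp
  then obtain K where K: "\<And>n j. finite (K n j) \<and> cball (0::'k) (real n) \<subseteq> (\<Union>x\<in>K n j. ball x (1 / Suc j))"
    by metis
  define D where "D = (\<Union>n. \<Union>j. K n j)"
  have cK: "countable (K n j)" for n j using K[of n j] countable_finite by blast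
  have "countable D" unfolding D_def
    by (intro countable_UN cK) auto
  moreover have "\<exists>d\<in>D. dist x d < e" if "0 < e" for x e
  proof -
    obtain n :: nat where n: "dist 0 x \<le> real n" using real_arch_simple by blast
    obtain j :: nat where j: "1 / Suc j < e" using \<open>0 < e\<close>
      by (metis nat_approx_posE)
    have "x \<in> cball 0 (real n)" using n by simp
    then obtain d where "d \<in> K n j" "x \<in> ball d (1 / Suc j)" using K[of n j] by blast
    then have "d \<in> D" "dist x d < e" unfolding D_def using j by (auto simp: dist_commute)
    then show ?thesis by blast
  qed
  ultimately show ?thesis by blast
qed

lemma measurable_dist:
  assumes f: "f \<in> borel_measurable N" and g: "g \<in> borel_measurable N"
  shows "(\<lambda>w. dist (f w) (g w :: 'k)) \<in> borel_measurable N"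
proof -
  obtain D :: "'k set" where D: "countable D" "\<And>x e. 0 < e \<Longrightarrow> \<exists>d\<in>D. dist x d < e"
    using dense_countable by blast
  have cd: "(\<lambda>x. dist x d) \<in> borel_measurable borel" for d :: 'k
    by (intro borel_measurable_continuous_onI continuous_intros)
  have m1: "(\<lambda>w. dist (f w) d + dist d (g w)) \<in> borel_measurable N" for d
  proof -
    have "(\<lambda>w. dist (f w) d) \<in> borel_measurable N" using measurable_compose[OF f cd] by simp
    moreover have "(\<lambda>w. dist d (g w)) \<in> borel_measurable N"
      using measurable_compose[OF g cd] by (simp add: dist_commute)
    ultimately show ?thesis by simp
  qed
  have eq: "dist (f w) (g w) = (INF d\<in>D. dist (f w) d + dist d (g w))" for w
  proof -
    have ne: "D \<noteq> {}" using D(2)[of 1 "f w"] by auto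
    have bdd: "bdd_below ((\<lambda>d. dist (f w) d + dist d (g w)) ` D)"
      by (rule bdd_belowI[of _ 0]) auto
    show ?thesis
    proof (rule antisym)
      show "dist (f w) (g w) \<le> (INF d\<in>D. dist (f w) d + dist d (g w))"
        using ne by (intro cINF_greatest) (auto intro: dist_triangle)
      show "(INF d\<in>D. dist (f w) d + dist d (g w)) \<le> dist (f w) (g w)"
      proof (rule field_le_epsilon)
        fix e :: real assume "0 < e"
        then obtain d where d: "d \<in> D" "dist (g w) d < e / 2" using D(2)[of "e/2"] by auto
        have "(INF d\<in>D. dist (f w) d + dist d (g w)) \<le> dist (f w) d + dist d (g w)"
          using bdd d(1) by (rule cINF_lower)
        also have "\<dots> \<le> dist (f w) (g w) + 2 * dist d (g w)"
          using dist_triangle[of "f w" d "g w"] dist_triangle[of "f w" "d" "g w"]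
          by (smt (verit) dist_commute dist_triangle)
        also have "\<dots> \<le> dist (f w) (g w) + e" using d(2) by (simp add: dist_commute)
        finally show "(INF d\<in>D. dist (f w) d + dist d (g w)) \<le> dist (f w) (g w) + e" .
      qed
    qed
  qed
  show ?thesis unfolding eq
    by (rule borel_measurable_cINF_real[OF D(1) m1])
qed

lemma measurable_nabs_diff:
  assumes f: "f \<in> borel_measurable N" and g: "g \<in> borel_measurable N"
  shows "(\<lambda>w. nabs (f w - g w :: 'k)) \<in> borel_measurable N"
  using measurable_dist[OF f g] by (simp add: dist_eq)

lemma measurable_nabs:
  assumes f: "f \<in> borel_measurable N"
  shows "(\<lambda>w. nabs (f w :: 'k)) \<in> borel_measurable N"
  using measurable_nabs_diff[OF f borel_measurable_const[of 0]] by simp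

lemma discrete:
  assumes c: "0 < c"
  shows "finite {t. \<exists>x::'k. t = nabs x \<and> c \<le> t \<and> t \<le> B}"
proof (rule ccontr)
  let ?S = "{t. \<exists>x::'k. t = nabs x \<and> c \<le> t \<and> t \<le> B}"
  assume "infinite ?S"
  then obtain v :: "nat \<Rightarrow> real" where v: "inj v" "range v \<subseteq> ?S"
    using infinite_countable_subset by blast
  have "\<forall>n. \<exists>x::'k. v n = nabs x" using v(2) by blast
  then obtain x :: "nat \<Rightarrow> 'k" where x: "\<And>n. v n = nabs (x n)" by metis
  have vc: "c \<le> v n" "v n \<le> B" for n using v(2) by auto
  have "x n \<in> cball 0 B" for n using vc x by (simp add: dist_eq)
  then obtain l r where lr: "strict_mono (r :: nat \<Rightarrow> nat)" "(x \<circ> r) \<longlonglongrightarrow> l"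
    using compact_cball0[of B] unfolding compact_eq_seq_compact_metric seq_compact_def by metis
  then have "Cauchy (x \<circ> r)" using LIMSEQ_imp_Cauchy by blast
  then obtain N where N: "\<And>m n. N \<le> m \<Longrightarrow> N \<le> n \<Longrightarrow> dist ((x \<circ> r) m) ((x \<circ> r) n) < c"
    using c unfolding Cauchy_def by metis
  have ne: "r N \<noteq> r (Suc N)" using lr(1) by (metis lessI less_irrefl strict_mono_less)
  have "v (r N) \<noteq> v (r (Suc N))" using v(1) ne by (meson injD)
  then have "c \<le> nabs (x (r N) - x (r (Suc N)))"
  proof (cases "v (r N) < v (r (Suc N))")
    case True
    then have "nabs (x (r (Suc N)) - x (r N)) = v (r (Suc N))" using ultra_eq x by metis
    then show ?thesis using vc nabs_diff_comm by metis
  next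
    case False
    then have "v (r (Suc N)) < v (r N)" using \<open>v (r N) \<noteq> v (r (Suc N))\<close> by linarith
    then have "nabs (x (r N) - x (r (Suc N))) = v (r N)" using ultra_eq x by metis
    then show ?thesis using vc by metis
  qed
  moreover have "dist (x (r N)) (x (r (Suc N))) < c" using N[of N "Suc N"] by simp
  ultimately show False by (simp add: dist_eq)
qed

end



lemma SUP_as_INF_real: "(SUP i\<in>I. f i) = - (INF i\<in>I. - f i :: real)"
  by (simp add: Inf_real_def image_image)

lemma powr_root_le:
  fixes x a :: real and p :: nat
  assumes "0 \<le> x" "0 \<le> a" "1 \<le> p"
  shows "x powr (1 / real p) \<le> a \<longleftrightarrow> x \<le> a ^ p"
proof -
  have eq: "(x powr (1 / real p)) ^ p = x"
  proof (cases "x = 0")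
    case True then show ?thesis using assms by simp
  next
    case False
    then have "0 < x" using assms by simp
    then have "(x powr (1 / real p)) ^ p = (x powr (1 / real p)) powr (real p)"
      by (simp add: powr_realpow)
    also have "\<dots> = x" using assms \<open>0 < x\<close> by (simp add: powr_powr)
    finally show ?thesis .
  qed
  have nn: "0 \<le> x powr (1 / real p)" by simp
  show ?thesis
  proof
    assume "x powr (1 / real p) \<le> a"
    then have "(x powr (1 / real p)) ^ p \<le> a ^ p" using nn by (rule power_mono)
    then show "x \<le> a ^ p" using eq by simp
  next
    assume "x \<le> a ^ p"
    then have "(x powr (1 / real p)) ^ p \<le> a ^ p" using eq by simp
    then show "x powr (1 / real p) \<le> a"
      using power_le_imp_le_base[of "x powr (1 / real p)" "p - 1" a] assms by simp
  qed
qed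

locale csup = prob_space M for M :: "'w measure" +
  fixes G :: "'w measure"
  assumes sub: "subalgebra M G"
begin

sublocale fms: finite_measure_subalgebra M G
  using sub by unfold_locales

lemma meas_G_M: "f \<in> borel_measurable G \<Longrightarrow> f \<in> borel_measurable M"
  using measurable_from_subalg[OF sub] by blast

lemma sets_G_M: "A \<in> sets G \<Longrightarrow> A \<in> sets M"
  using sub unfolding subalgebra_def by blast

lemma space_G: "space G = space M"
  using sub unfolding subalgebra_def by blast

lemma F1: "ess_sup_cond M G S \<in> borel_measurable G"
proof -
  have m: "(\<lambda>w. - (real_cond_exp M G (\<lambda>v. S v ^ p) w powr (1 / real p))) \<in> borel_measurable G" for p
    by measurable
  have "(\<lambda>w. - (INF p\<in>{1::nat..}. - (real_cond_exp M G (\<lambda>v. S v ^ p) w powr (1 / real p))))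
      \<in> borel_measurable G"
    by (intro borel_measurable_uminus borel_measurable_cINF_real m) auto
  then show ?thesis unfolding ess_sup_cond_def SUP_as_INF_real .
qed

lemma F1M: "ess_sup_cond M G S \<in> borel_measurable M"
  using F1 meas_G_M by blast

context
  fixes S :: "'w \<Rightarrow> real" and C :: real
  assumes Smeas[measurable]: "S \<in> borel_measurable M"
    and Spos: "\<And>w. 0 \<le> S w"
    and Sbd: "AE w in M. S w \<le> C"
begin

lemma int_pow: "integrable M (\<lambda>w. S w ^ p)"
proof (rule integrable_const_bound[where B = "C ^ p"])
  show "AE x in M. norm (S x ^ p) \<le> C ^ p"
    using Sbd by eventually_elim (simp add: Spos power_mono)
qed simp

lemma bound_gen:
  assumes W[measurable]: "W \<in> borel_measurable G" and SW: "AE w in M. S w \<le> W w"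
  shows "AE w in M. \<forall>p\<ge>1. 0 \<le> real_cond_exp M G (\<lambda>v. S v ^ p) w \<and>
            real_cond_exp M G (\<lambda>v. S v ^ p) w powr (1 / real p) \<le> max 0 (min (W w) C)"
proof -
  define V where "V = (\<lambda>w. max 0 (min (W w) C))"
  have VG[measurable]: "V \<in> borel_measurable G" unfolding V_def by measurable
  have VM[measurable]: "V \<in> borel_measurable M" using meas_G_M[OF VG] .
  have SV: "AE w in M. S w \<le> V w" using SW Sbd by eventually_elim (auto simp: V_def)
  have V0: "0 \<le> V w" for w unfolding V_def by simp
  have "AE w in M. 0 \<le> real_cond_exp M G (\<lambda>v. S v ^ p) w \<and>
            real_cond_exp M G (\<lambda>v. S v ^ p) w powr (1 / real p) \<le> V w" if p: "1 \<le> p" for p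
  proof -
    have intV: "integrable M (\<lambda>w. V w ^ p)"
    proof (rule integrable_const_bound[where B = "max 0 C ^ p"])
      show "AE x in M. norm (V x ^ p) \<le> max 0 C ^ p"
        by (intro AE_I2) (auto simp: V_def intro!: power_mono)
    qed simp
    have 1: "AE w in M. real_cond_exp M G (\<lambda>v. S v ^ p) w \<le> real_cond_exp M G (\<lambda>v. V v ^ p) w"
      by (rule fms.real_cond_exp_mono[OF _ int_pow intV])
         (use SV in \<open>eventually_elim, auto simp: Spos power_mono\<close>)
    have 2: "AE w in M. real_cond_exp M G (\<lambda>v. V v ^ p) w = V w ^ p"
      by (rule fms.real_cond_exp_F_meas[OF intV]) measurable
    have 3: "AE w in M. 0 \<le> real_cond_exp M G (\<lambda>v. S v ^ p) w"
      by (rule fms.real_cond_exp_pos) (auto simp: Spos)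
    show ?thesis using 1 2 3
    proof eventually_elim
      case (elim w)
      then show ?case using powr_root_le[OF _ V0 p] by auto
    qed
  qed
  then have "\<forall>p. AE w in M. 1 \<le> p \<longrightarrow> 0 \<le> real_cond_exp M G (\<lambda>v. S v ^ p) w \<and>
            real_cond_exp M G (\<lambda>v. S v ^ p) w powr (1 / real p) \<le> V w"
    by (metis (no_types, lifting) AE_I2 AE_mp)
  then have "AE w in M. \<forall>p. 1 \<le> p \<longrightarrow> 0 \<le> real_cond_exp M G (\<lambda>v. S v ^ p) w \<and>
            real_cond_exp M G (\<lambda>v. S v ^ p) w powr (1 / real p) \<le> V w"
    by (simp add: AE_all_countable)
  then show ?thesis unfolding V_def by simp
qed

lemma F3:
  assumes W[measurable]: "W \<in> borel_measurable G" and SW: "AE w in M. S w \<le> W w"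
  shows "AE w in M. ess_sup_cond M G S w \<le> W w"
  using bound_gen[OF W SW] SW
proof eventually_elim
  case (elim w)
  have W0: "0 \<le> W w" using elim(2) Spos[of w] by linarith
  have "ess_sup_cond M G S w \<le> max 0 (min (W w) C)"
    unfolding ess_sup_cond_def using elim(1) by (intro cSUP_least) auto
  also have "\<dots> \<le> W w" using W0 by simp
  finally show ?case .
qed

lemma F0:
  "AE w in M. bdd_above ((\<lambda>p. real_cond_exp M G (\<lambda>v. S v ^ p) w powr (1 / real p)) ` {1..})
     \<and> 0 \<le> ess_sup_cond M G S w \<and> (\<forall>p\<ge>1. 0 \<le> real_cond_exp M G (\<lambda>v. S v ^ p) w)"
  using bound_gen[OF borel_measurable_const Sbd]
proof eventually_elim
  case (elim w)
  have bdd: "bdd_above ((\<lambda>p. real_cond_exp M G (\<lambda>v. S v ^ p) w powr (1 / real p)) ` {1..})"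
    using elim(1) by (intro bdd_aboveI2[of _ _ "max 0 (min C C)"]) auto
  have "0 \<le> real_cond_exp M G (\<lambda>v. S v ^ 1) w powr (1 / real (1::nat))" by simp
  also have "\<dots> \<le> ess_sup_cond M G S w"
    unfolding ess_sup_cond_def by (rule cSUP_upper[OF _ bdd]) auto
  finally show ?case using bdd elim(1) by auto
qed

end
end


context csup begin
context
  fixes S :: "'w \<Rightarrow> real" and C :: real
  assumes Smeas[measurable]: "S \<in> borel_measurable M"
    and Spos: "\<And>w. 0 \<le> S w"
    and Sbd: "AE w in M. S w \<le> C"
begin
lemmas F0' = F0[OF Smeas Spos Sbd]
lemmas int_pow' = int_pow[OF Smeas Spos Sbd]

lemma F2: "AE w in M. S w \<le> ess_sup_cond M G S w"
proof -
  let ?N = "ess_sup_cond M G S"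
  let ?e = "\<lambda>p. real_cond_exp M G (\<lambda>v. S v ^ p)"
  have NG[measurable]: "?N \<in> borel_measurable G" by (rule F1)
  have NM[measurable]: "?N \<in> borel_measurable M" by (rule F1M)
  have key: "AE w in M. \<not> (?N w \<le> a \<and> b < S w)" if ab: "0 < a" "a < b" for a b :: real
  proof -
    define B where "B = {w \<in> space M. ?N w \<le> a}"
    define A where "A = {w \<in> space M. ?N w \<le> a \<and> b < S w}"
    have BG[measurable]: "B \<in> sets G" unfolding B_def space_G[symmetric] by measurable
    have BM[measurable]: "B \<in> sets M" using sets_G_M[OF BG] .
    have AM[measurable]: "A \<in> sets M" unfolding A_def by measurable
    have AB: "A \<subseteq> B" unfolding A_def B_def by auto
    have ineq: "b ^ p * measure M A \<le> a ^ p" if p: "1 \<le> p" for p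
    proof -
      have intB: "integrable M (\<lambda>w. indicator B w * S w ^ p)"
        using integrable_mult_indicator[OF BM int_pow'[of p]] by simp
      have eqint: "(\<integral>w. indicator B w * ?e p w \<partial>M) = (\<integral>w. indicator B w * S w ^ p \<partial>M)"
        and inte: "integrable M (\<lambda>w. indicator B w * ?e p w)"
        using fms.real_cond_exp_intg[OF intB] by auto
      have intc: "integrable M (\<lambda>w. indicator B w * a ^ p)"
      proof (rule integrable_const_bound[where B = "a ^ p"])
        show "AE x in M. norm (indicator B x * a ^ p) \<le> a ^ p"
          using ab by (intro AE_I2) (simp add: indicator_def)
      qed measurable
      have "AE w in M. indicator B w * ?e p w \<le> indicator B w * a ^ p"
        using F0'
      proof eventually_elim
        case (elim w)
        show ?case
        proof (cases "w \<in> B")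
          case True
          then have Na: "?N w \<le> a" unfolding B_def by simp
          have "?e p w powr (1 / real p) \<le> ?N w"
            unfolding ess_sup_cond_def using elim p by (intro cSUP_upper) auto
          then have "?e p w powr (1 / real p) \<le> a" using Na by linarith
          then have "?e p w \<le> a ^ p" using powr_root_le[of "?e p w" a p] elim p ab by auto
          then show ?thesis using True by simp
        qed simp
      qed
      then have "(\<integral>w. indicator B w * ?e p w \<partial>M) \<le> (\<integral>w. indicator B w * a ^ p \<partial>M)"
        by (rule integral_mono_AE[OF inte intc])
      also have "\<dots> = measure M B * a ^ p" using BM by simp
      also have "\<dots> \<le> a ^ p" using ab by (simp add: mult_left_le_one_le)
      finally have up: "(\<integral>w. indicator B w * S w ^ p \<partial>M) \<le> a ^ p" using eqint by simp
      have intA: "integrable M (\<lambda>w. indicator A w * b ^ p)"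
      proof (rule integrable_const_bound[where B = "b ^ p"])
        show "AE x in M. norm (indicator A x * b ^ p) \<le> b ^ p"
          using ab by (intro AE_I2) (simp add: indicator_def)
      qed measurable
      have "measure M A * b ^ p = (\<integral>w. indicator A w * b ^ p \<partial>M)" using AM by simp
      also have "\<dots> \<le> (\<integral>w. indicator B w * S w ^ p \<partial>M)"
      proof (rule integral_mono[OF intA intB])
        fix w assume "w \<in> space M"
        show "indicator A w * b ^ p \<le> indicator B w * S w ^ p"
        proof (cases "w \<in> A")
          case True
          then have "w \<in> B" "b < S w" using AB unfolding A_def by auto
          then show ?thesis using True ab by (simp add: power_mono)
        qed (auto simp: indicator_def Spos)
      qed
      finally show ?thesis using up by (simp add: mult.commute)
    qed
    have "measure M A = 0"
    proof (rule ccontr)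
      assume "measure M A \<noteq> 0"
      then have eta: "0 < measure M A" using measure_nonneg[of M A] by linarith
      have ba: "1 < b / a" using ab by simp
      obtain n where n: "1 / measure M A < (b / a) ^ n" using real_arch_pow[OF ba] by blast
      have pinc: "(b / a) ^ n \<le> (b / a) ^ Suc n" using ba by (intro power_increasing) auto
      have "b ^ Suc n * measure M A \<le> a ^ Suc n" using ineq[of "Suc n"] by simp
      then have "b ^ Suc n \<le> a ^ Suc n / measure M A"
        using eta by (simp add: pos_le_divide_eq)
      then have "b ^ Suc n / a ^ Suc n \<le> (a ^ Suc n / measure M A) / a ^ Suc n"
        using ab by (intro divide_right_mono) auto
      also have "\<dots> = 1 / measure M A" using ab by simp
      finally have "(b / a) ^ Suc n \<le> 1 / measure M A" by (simp add: power_divide)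
      then show False using n pinc by linarith
    qed
    then have "emeasure M A = 0" by (simp add: emeasure_eq_measure)
    then have "A \<in> null_sets M" using AM by (intro null_setsI)
    from AE_not_in[OF this] show ?thesis
      by (rule AE_mp) (rule AE_I2, auto simp: A_def)
  qed
  have "\<forall>a::rat. \<forall>b::rat. AE w in M. 0 < a \<longrightarrow> a < b \<longrightarrow> \<not> (?N w \<le> of_rat a \<and> of_rat b < S w)"
  proof (intro allI)
    fix a b :: rat
    show "AE w in M. 0 < a \<longrightarrow> a < b \<longrightarrow> \<not> (?N w \<le> of_rat a \<and> of_rat b < S w)"
    proof (cases "0 < a \<and> a < b")
      case True
      then have "0 < (of_rat a :: real)" "(of_rat a :: real) < of_rat b" by (simp_all add: of_rat_less)
      from key[OF this] show ?thesis by (rule AE_mp) (rule AE_I2, blast)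
    qed auto
  qed
  then have "AE w in M. \<forall>a::rat. \<forall>b::rat. 0 < a \<longrightarrow> a < b \<longrightarrow> \<not> (?N w \<le> of_rat a \<and> of_rat b < S w)"
    by (simp add: AE_all_countable)
  then show ?thesis using F0'
  proof eventually_elim
    case (elim w)
    show ?case
    proof (rule ccontr)
      assume "\<not> S w \<le> ?N w"
      then have lt: "?N w < S w" by simp
      obtain r1 where r1: "r1 \<in> \<rat>" "?N w < r1" "r1 < S w" using Rats_dense_in_real[OF lt] by blast
      obtain r2 where r2: "r2 \<in> \<rat>" "r1 < r2" "r2 < S w" using Rats_dense_in_real[OF r1(3)] by blast
      obtain a where a: "r1 = of_rat a" using r1(1) Rats_cases by blast
      obtain b where b: "r2 = of_rat b" using r2(1) Rats_cases by blast
      have "0 < a" using a r1 elim(2) by (metis of_rat_less of_rat_0 order_le_less_trans)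
      moreover have "a < b" using a b r2 by (simp add: of_rat_less)
      ultimately have "\<not> (?N w \<le> of_rat a \<and> of_rat b < S w)" using elim(1) by blast
      moreover have "?N w \<le> of_rat a" using r1(2) a by simp
      moreover have "of_rat b < S w" using r2(3) b by simp
      ultimately show False by blast
    qed
  qed
qed

end
end



locale mainctx = nafield nabs + csup M G
  for nabs :: "'k::{field,metric_space} \<Rightarrow> real" and M :: "'w measure" and G +
  fixes X :: "'w \<Rightarrow> 'k"
  assumes XL: "X \<in> Linf M nabs M"
begin

definition nn :: "('w \<Rightarrow> 'k) \<Rightarrow> 'w \<Rightarrow> real" where
  "nn Z = normG M nabs G (\<lambda>v. X v - Z v)"

lemma nn_eq: "nn Z = ess_sup_cond M G (\<lambda>w. nabs (X w - Z w))"
  unfolding nn_def normG_def ..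

lemma XM[measurable]: "X \<in> borel_measurable M" using XL by (simp add: Linf_def)

lemma Xbd: "\<exists>C. AE w in M. nabs (X w) \<le> C" using XL by (simp add: Linf_def)

lemma LG: "Z \<in> Linf M nabs G \<Longrightarrow> Z \<in> borel_measurable G" by (simp add: Linf_def)

lemma LM: "Z \<in> Linf M nabs G \<Longrightarrow> Z \<in> borel_measurable M" using LG meas_G_M by blast

lemma Lbd: "Z \<in> Linf M nabs G \<Longrightarrow> \<exists>C. AE w in M. nabs (Z w) \<le> C" by (simp add: Linf_def)

lemma S_facts:
  assumes "Z \<in> Linf M nabs G"
  shows "\<exists>C. (\<lambda>w. nabs (X w - Z w)) \<in> borel_measurable M \<and> (\<forall>w. 0 \<le> nabs (X w - Z w))
     \<and> (AE w in M. nabs (X w - Z w) \<le> C)"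
proof -
  obtain CX where CX: "AE w in M. nabs (X w) \<le> CX" using Xbd by blast
  obtain CZ where CZ: "AE w in M. nabs (Z w) \<le> CZ" using Lbd[OF assms] by blast
  have "AE w in M. nabs (X w - Z w) \<le> max CX CZ" using CX CZ
  proof eventually_elim
    case (elim w) then show ?case using ultra_sub[of "X w" "Z w"] by linarith
  qed
  moreover have "(\<lambda>w. nabs (X w - Z w)) \<in> borel_measurable M"
    by (rule measurable_nabs_diff[OF XM LM[OF assms]])
  ultimately show ?thesis by auto
qed

lemma nF1[measurable]: "nn Z \<in> borel_measurable G" unfolding nn_eq by (rule F1)
lemma nF1M[measurable]: "nn Z \<in> borel_measurable M" unfolding nn_eq by (rule F1M)

lemma nF2: "Z \<in> Linf M nabs G \<Longrightarrow> AE w in M. nabs (X w - Z w) \<le> nn Z w"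
  using S_facts F2 unfolding nn_eq by blast

lemma nF3: "Z \<in> Linf M nabs G \<Longrightarrow> W \<in> borel_measurable G \<Longrightarrow>
    AE w in M. nabs (X w - Z w) \<le> W w \<Longrightarrow> AE w in M. nn Z w \<le> W w"
  using S_facts F3 unfolding nn_eq by blast

lemma nF0: assumes "Z \<in> Linf M nabs G" shows "\<exists>B. AE w in M. 0 \<le> nn Z w \<and> nn Z w \<le> B"
proof -
  obtain C where C: "(\<lambda>w. nabs (X w - Z w)) \<in> borel_measurable M" "\<forall>w. 0 \<le> nabs (X w - Z w)"
     "AE w in M. nabs (X w - Z w) \<le> C" using S_facts[OF assms] by blast
  have 1: "AE w in M. 0 \<le> nn Z w" using F0[OF C(1) _ C(3)] C(2) unfolding nn_eq by auto
  have 2: "AE w in M. nn Z w \<le> C" using nF3[OF assms borel_measurable_const C(3)] .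
  show ?thesis using 1 2 by (intro exI[of _ C]) (auto elim: AE_mp)
qed

lemma nint: assumes "Z \<in> Linf M nabs G" shows "integrable M (nn Z)"
proof -
  obtain B where B: "AE w in M. 0 \<le> nn Z w \<and> nn Z w \<le> B" using nF0[OF assms] by blast
  show ?thesis
  proof (rule integrable_const_bound[where B = B])
    show "AE x in M. norm (nn Z x) \<le> B" using B by eventually_elim auto
  qed measurable
qed

lemma zero_L: "(\<lambda>_. 0) \<in> Linf M nabs G" by (auto simp: Linf_def)

lemma paste:
  assumes Z1: "Z1 \<in> Linf M nabs G" and Z2: "Z2 \<in> Linf M nabs G" and A: "A \<in> sets G"
  shows "(\<lambda>w. if w \<in> A then Z1 w else Z2 w) \<in> Linf M nabs G"
    "AE w in M. nn (\<lambda>w. if w \<in> A then Z1 w else Z2 w) w \<le> (if w \<in> A then nn Z1 w else nn Z2 w)"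
proof -
  let ?P = "\<lambda>w. if w \<in> A then Z1 w else Z2 w"
  have PG: "?P \<in> borel_measurable G"
    by (rule measurable_If_set[OF LG[OF Z1] LG[OF Z2]]) (use A in auto)
  obtain C1 where C1: "AE w in M. nabs (Z1 w) \<le> C1" using Lbd[OF Z1] by blast
  obtain C2 where C2: "AE w in M. nabs (Z2 w) \<le> C2" using Lbd[OF Z2] by blast
  have "AE w in M. nabs (?P w) \<le> max C1 C2" using C1 C2 by eventually_elim auto
  then show PL: "?P \<in> Linf M nabs G" using PG unfolding Linf_def by blast
  have WG: "(\<lambda>w. if w \<in> A then nn Z1 w else nn Z2 w) \<in> borel_measurable G"
    by (rule measurable_If_set[OF nF1 nF1]) (use A in auto)
  have "AE w in M. nabs (X w - ?P w) \<le> (if w \<in> A then nn Z1 w else nn Z2 w)"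
    using nF2[OF Z1] nF2[OF Z2] by eventually_elim auto
  then show "AE w in M. nn ?P w \<le> (if w \<in> A then nn Z1 w else nn Z2 w)"
    by (rule nF3[OF PL WG])
qed

definition fV :: "real \<Rightarrow> real" where
  "fV t = Sup {v. v \<in> range nabs \<and> v \<le> max t 0}"

lemma fV_basic:
  shows "{v. v \<in> range nabs \<and> v \<le> max t 0} \<noteq> {}"
    and "bdd_above {v. v \<in> range nabs \<and> v \<le> max t 0}"
proof -
  have "0 \<in> {v. v \<in> range nabs \<and> v \<le> max t 0}" by (auto intro!: image_eqI[of 0 nabs 0])
  then show "{v. v \<in> range nabs \<and> v \<le> max t 0} \<noteq> {}" by blast
  show "bdd_above {v. v \<in> range nabs \<and> v \<le> max t 0}" by (rule bdd_aboveI[of _ "max t 0"]) auto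
qed

lemma fV_le: "fV t \<le> max t 0"
  unfolding fV_def using fV_basic by (intro cSup_least) auto

lemma fV_upper: "v \<in> range nabs \<Longrightarrow> v \<le> max t 0 \<Longrightarrow> v \<le> fV t"
  unfolding fV_def using fV_basic by (intro cSup_upper) auto

lemma fV_mono: "mono fV"
proof
  fix s t :: real assume "s \<le> t"
  then show "fV s \<le> fV t" unfolding fV_def using fV_basic
    by (intro cSup_subset_mono) auto
qed

lemma fV_range: "fV t \<in> range nabs"
proof -
  let ?T = "{v. v \<in> range nabs \<and> v \<le> max t 0}"
  show ?thesis
  proof (cases "\<exists>v\<in>?T. 0 < v")
    case True
    then obtain v0 where v0: "v0 \<in> ?T" "0 < v0" by blast
    let ?T' = "{v\<in>?T. v0 \<le> v}"
    have "?T' \<subseteq> {s. \<exists>x::'k. s = nabs x \<and> v0 \<le> s \<and> s \<le> max t 0}" by auto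
    then have fin: "finite ?T'" using discrete[OF v0(2), of "max t 0"] finite_subset by blast
    have ne: "?T' \<noteq> {}" using v0 by auto
    have "Sup ?T = Max ?T'"
    proof (rule cSup_eq_maximum)
      show "Max ?T' \<in> ?T" using Max_in[OF fin ne] by blast
      fix x assume "x \<in> ?T"
      then show "x \<le> Max ?T'"
      proof (cases "v0 \<le> x")
        case True then show ?thesis using \<open>x \<in> ?T\<close> fin by (intro Max_ge) auto
      next
        case False
        then have "x < v0" by simp
        also have "v0 \<le> Max ?T'" using v0 fin by (intro Max_ge) auto
        finally show ?thesis by simp
      qed
    qed
    then show ?thesis unfolding fV_def using Max_in[OF fin ne] by auto
  next
    case False
    have "Sup ?T = 0"
    proof (rule cSup_eq_maximum)
      show "0 \<in> ?T" by (auto intro!: image_eqI[of 0 nabs 0])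
      fix x assume "x \<in> ?T" then show "x \<le> 0" using False by force
    qed
    then show ?thesis unfolding fV_def by (auto intro!: image_eqI[of 0 nabs 0])
  qed
qed

lemma nV: assumes Z: "Z \<in> Linf M nabs G" shows "AE w in M. nn Z w \<in> range nabs"
proof -
  have WG: "(\<lambda>w. fV (nn Z w)) \<in> borel_measurable G"
    using measurable_compose[OF nF1 borel_measurable_mono[OF fV_mono]] by simp
  have "AE w in M. nabs (X w - Z w) \<le> fV (nn Z w)" using nF2[OF Z]
  proof eventually_elim
    case (elim w)
    then show ?case by (intro fV_upper) auto
  qed
  from nF3[OF Z WG this] obtain B where B: "AE w in M. 0 \<le> nn Z w \<and> nn Z w \<le> B"
    using nF0[OF Z] by blast
  from nF3[OF Z WG \<open>AE w in M. nabs (X w - Z w) \<le> fV (nn Z w)\<close>] B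
  show ?thesis
  proof eventually_elim
    case (elim w)
    then have "nn Z w = fV (nn Z w)" using fV_le[of "nn Z w"] by auto
    then show ?case using fV_range by metis
  qed
qed

end



context mainctx
begin

lemma lim_small:
  assumes "\<And>j. dist (f j) (l::'k) < 1 / Suc j"
  shows "f \<longlonglongrightarrow> l"
proof (rule metric_LIMSEQ_I)
  fix e :: real assume "0 < e"
  then obtain N :: nat where N: "1 / Suc N < e" by (metis nat_approx_posE)
  show "\<exists>N. \<forall>n\<ge>N. dist (f n) l < e"
  proof (intro exI allI impI)
    fix n assume "N \<le> n"
    then have "1 / real (Suc n) \<le> 1 / Suc N" by (simp add: frac_le)
    then show "dist (f n) l < e" using assms[of n] N by linarith
  qed
qed

lemma cauchy_small:
  assumes "\<And>i j. dist (f i) (f j :: 'k) \<le> 1 / Suc i + 1 / Suc j"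
  shows "Cauchy f"
proof (rule metric_CauchyI)
  fix e :: real assume "0 < e"
  then obtain N :: nat where N: "1 / Suc N < e / 2" by (metis half_gt_zero nat_approx_posE)
  show "\<exists>M. \<forall>m\<ge>M. \<forall>n\<ge>M. dist (f m) (f n) < e"
  proof (intro exI allI impI)
    fix m n assume "N \<le> m" "N \<le> n"
    then have "1 / real (Suc m) \<le> 1 / Suc N" "1 / real (Suc n) \<le> 1 / Suc N" by (simp_all add: frac_le)
    then show "dist (f m) (f n) < e" using assms[of m n] N by linarith
  qed
qed

lemma existence: "\<exists>Y\<in>Linf M nabs G. \<forall>Z\<in>Linf M nabs G. AE w in M. nn Y w \<le> nn Z w"
proof -
  let ?L = "Linf M nabs G"
  define I where "I Z = integral\<^sup>L M (nn Z)" for Z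
  have Ige: "0 \<le> I Z" if Zin: "Z \<in> ?L" for Z
  proof -
    obtain B where "AE w in M. 0 \<le> nn Z w \<and> nn Z w \<le> B" using nF0[OF Zin] by blast
    then have "AE w in M. 0 \<le> nn Z w" by eventually_elim auto
    then show ?thesis unfolding I_def by (rule integral_nonneg_AE)
  qed
  define \<mu> where "\<mu> = (INF Z\<in>?L. I Z)"
  have Lne: "?L \<noteq> {}" using zero_L by blast
  have bddI: "bdd_below (I ` ?L)" using Ige by (intro bdd_belowI2[where m=0]) auto
  have "\<exists>Z\<in>?L. I Z < \<mu> + 1 / Suc k" for k :: nat
  proof -
    have "\<mu> < \<mu> + 1 / Suc k" by simp
    then show ?thesis unfolding \<mu>_def using cINF_less_iff[OF Lne bddI] by blast
  qed
  then obtain Zs where Zs: "\<And>k. Zs k \<in> ?L" "\<And>k. I (Zs k) < \<mu> + 1 / Suc k" by metis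
  define r where "r k = nn (Zs k)" for k
  define m where "m w = (INF k. r k w)" for w
  have rG[measurable]: "r k \<in> borel_measurable G" for k unfolding r_def by (rule nF1)
  have ZsG[measurable]: "Zs k \<in> borel_measurable G" for k using LG[OF Zs(1)] .
  have mG[measurable]: "m \<in> borel_measurable G" unfolding m_def
    by (rule borel_measurable_cINF_real) auto
  obtain B0 where B0: "AE w in M. 0 \<le> r 0 w \<and> r 0 w \<le> B0" using nF0[OF Zs(1)] unfolding r_def by blast
  obtain CX where CX: "AE w in M. nabs (X w) \<le> CX" using Xbd by blast
  define GP where "GP w \<longleftrightarrow> (\<forall>k. nabs (X w - Zs k w) \<le> r k w \<and> 0 \<le> r k w \<and> r k w \<in> range nabs)
      \<and> nabs (X w) \<le> CX \<and> r 0 w \<le> B0" for w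
  have "AE w in M. \<forall>k. nabs (X w - Zs k w) \<le> r k w \<and> 0 \<le> r k w \<and> r k w \<in> range nabs"
  proof (subst AE_all_countable, intro allI)
    fix k
    obtain B where "AE w in M. 0 \<le> nn (Zs k) w \<and> nn (Zs k) w \<le> B" using nF0[OF Zs(1)] by blast
    with nF2[OF Zs(1)[of k]] nV[OF Zs(1)[of k]]
    show "AE w in M. nabs (X w - Zs k w) \<le> r k w \<and> 0 \<le> r k w \<and> r k w \<in> range nabs"
      unfolding r_def by eventually_elim auto
  qed
  then have AGP: "AE w in M. GP w" using CX B0 unfolding GP_def by eventually_elim auto
  have bdd: "bdd_below (range (\<lambda>k. r k w))" if "GP w" for w
    using that unfolding GP_def by (intro bdd_belowI2[where m=0]) auto
  have m_le: "m w \<le> r k w" if "GP w" for w k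
    unfolding m_def by (rule cINF_lower[OF bdd[OF that]]) simp
  have m_ge0: "0 \<le> m w" if "GP w" for w
    unfolding m_def using that unfolding GP_def by (intro cINF_greatest) auto
  have ex_lt: "\<exists>k. r k w < m w + e" if "GP w" "0 < e" for w e
  proof -
    have lt: "m w < m w + e" using that by simp
    have "(INF k. r k w) < m w + e \<longleftrightarrow> (\<exists>k. r k w < m w + e)"
      using cINF_less_iff[OF _ bdd[OF that(1)], of "m w + e"] by simp
    then show ?thesis using lt unfolding m_def by blast
  qed
  have attain: "\<exists>k. r k w = m w" if gp: "GP w" and mpos: "0 < m w" for w
  proof -
    let ?F = "{t. \<exists>k. t = r k w \<and> t \<le> m w + 1}"
    have "?F \<subseteq> {t. \<exists>x::'k. t = nabs x \<and> m w \<le> t \<and> t \<le> m w + 1}"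
      using gp m_le[OF gp] unfolding GP_def by fastforce
    then have fin: "finite ?F" using discrete[OF mpos, of "m w + 1"] finite_subset by blast
    obtain k1 where "r k1 w < m w + 1" using ex_lt[OF gp, of 1] by auto
    then have "r k1 w \<in> ?F" by auto
    then have ne: "?F \<noteq> {}" by blast
    have MinF: "Min ?F \<in> ?F" using Min_in[OF fin ne] .
    then obtain k0 where k0: "Min ?F = r k0 w" by blast
    have "Min ?F \<le> (INF k. r k w)"
    proof (rule cINF_greatest)
      fix k
      show "Min ?F \<le> r k w"
      proof (cases "r k w \<le> m w + 1")
        case True then show ?thesis using fin by (intro Min_le) auto
      next
        case False
        have "Min ?F \<le> m w + 1" using MinF by auto
        then show ?thesis using False by linarith
      qed
    qed simp
    then have "r k0 w = m w" using k0 m_le[OF gp, of k0] unfolding m_def by linarith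
    then show ?thesis by blast
  qed
  define T where "T = {w \<in> space M. \<exists>k. r k w = m w}"
  have TG[measurable]: "T \<in> sets G" unfolding T_def space_G[symmetric] by measurable
  define kT where "kT w = (LEAST k. r k w = m w)" for w
  define kj where "kj j w = (LEAST k. r k w < m w + 1 / Suc j)" for j w
  define Wj where "Wj j w = Zs (kj j w) w" for j w
  have kTG: "kT \<in> measurable G (count_space UNIV)" unfolding kT_def by measurable
  have kjG: "kj j \<in> measurable G (count_space UNIV)" for j unfolding kj_def by measurable
  have YTG: "(\<lambda>w. Zs (kT w) w) \<in> borel_measurable G"
    by (rule measurable_compose_countable[OF _ kTG]) simp
  have WjG[measurable]: "Wj j \<in> borel_measurable G" for j
    unfolding Wj_def by (rule measurable_compose_countable[OF _ kjG]) simp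
  have dWG[measurable]: "(\<lambda>w. dist (Wj i w) (Wj j w)) \<in> borel_measurable G" for i j
    by (rule measurable_dist) measurable
  define U where "U = {w \<in> space M. \<forall>i j. dist (Wj i w) (Wj j w) \<le> 1 / Suc i + 1 / Suc j}"
  have UG[measurable]: "U \<in> sets G" unfolding U_def space_G[symmetric] by measurable
  define W2 where "W2 j w = (if w \<in> U then Wj j w else 0)" for j w
  have W2G[measurable]: "W2 j \<in> borel_measurable G" for j unfolding W2_def
    by (rule measurable_If_set) auto
  define Y2 where "Y2 w = lim (\<lambda>j. W2 j w)" for w
  have conv: "(\<lambda>j. W2 j w) \<longlonglongrightarrow> Y2 w" for w
  proof (cases "w \<in> U")
    case True
    then have "Cauchy (\<lambda>j. Wj j w)" unfolding U_def by (intro cauchy_small) auto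
    then obtain l where "(\<lambda>j. Wj j w) \<longlonglongrightarrow> l" using cauchy_conv by blast
    then have "convergent (\<lambda>j. W2 j w)" using True unfolding W2_def convergent_def by auto
    then show ?thesis unfolding Y2_def by (simp add: convergent_LIMSEQ_iff)
  next
    case False
    then have "(\<lambda>j. W2 j w) = (\<lambda>j. 0)" unfolding W2_def by auto
    then show ?thesis unfolding Y2_def by (simp add: limI)
  qed
  have Y2G: "Y2 \<in> borel_measurable G"
    by (rule borel_measurable_LIMSEQ_metric[OF W2G conv])
  define Y where "Y w = (if w \<in> T then Zs (kT w) w else Y2 w)" for w
  have YG: "Y \<in> borel_measurable G" unfolding Y_def
    by (rule measurable_If_set[OF YTG Y2G]) auto
  have key: "AE w in M. nabs (X w - Y w) \<le> m w" using AGP AE_space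
  proof eventually_elim
    case (elim w)
    note gp = elim(1)
    show ?case
    proof (cases "w \<in> T")
      case True
      then have "\<exists>k. r k w = m w" unfolding T_def by blast
      then have rk: "r (kT w) w = m w" unfolding kT_def by (rule LeastI_ex)
      have "Y w = Zs (kT w) w" using True unfolding Y_def by simp
      moreover have "nabs (X w - Zs (kT w) w) \<le> r (kT w) w" using gp unfolding GP_def by blast
      ultimately show ?thesis using rk by simp
    next
      case False
      then have nT: "\<not> (\<exists>k. r k w = m w)" using elim(2) unfolding T_def by blast
      then have "\<not> 0 < m w" using attain[OF gp] by blast
      then have "m w = 0" using m_ge0[OF gp] by linarith
      have small: "dist (X w) (Wj j w) < 1 / Suc j" for j
      proof -
        have "\<exists>k. r k w < m w + 1 / Suc j" by (rule ex_lt[OF gp]) simp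
        then have "r (kj j w) w < m w + 1 / Suc j" unfolding kj_def by (rule LeastI_ex)
        moreover have "nabs (X w - Wj j w) \<le> r (kj j w) w" using gp unfolding GP_def Wj_def by blast
        ultimately show ?thesis using \<open>m w = 0\<close> by (simp add: dist_eq)
      qed
      have "w \<in> U" unfolding U_def
      proof (intro CollectI conjI allI)
        show "w \<in> space M" by (rule elim(2))
        fix i j
        have "dist (Wj i w) (Wj j w) \<le> dist (X w) (Wj i w) + dist (X w) (Wj j w)"
          by (rule dist_triangle3)
        then show "dist (Wj i w) (Wj j w) \<le> 1 / Suc i + 1 / Suc j"
          using small[of i] small[of j] by linarith
      qed
      then have "(\<lambda>j. W2 j w) = (\<lambda>j. Wj j w)" unfolding W2_def by auto
      moreover have "(\<lambda>j. Wj j w) \<longlonglongrightarrow> X w"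
        by (rule lim_small) (subst dist_commute, rule small)
      ultimately have "(\<lambda>j. W2 j w) \<longlonglongrightarrow> X w" by simp
      then have "Y2 w = X w" using LIMSEQ_unique[OF conv[of w]] by blast
      then show ?thesis using False \<open>m w = 0\<close> unfolding Y_def by simp
    qed
  qed
  have YL: "Y \<in> ?L"
  proof -
    have "AE w in M. nabs (Y w) \<le> max CX B0" using key AGP
    proof eventually_elim
      case (elim w)
      have "nabs (Y w) \<le> max (nabs (X w)) (nabs (X w - Y w))" by (rule nabs_le_max)
      moreover have "m w \<le> r 0 w" by (rule m_le[OF elim(2)])
      ultimately show ?case using elim unfolding GP_def by linarith
    qed
    then show ?thesis using YG unfolding Linf_def by blast
  qed
  have nY: "AE w in M. nn Y w \<le> m w" by (rule nF3[OF YL mG key])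
  have IYk: "I Y \<le> I (Zs k)" for k
    unfolding I_def
  proof (rule integral_mono_AE[OF nint[OF YL] nint[OF Zs(1)]])
    show "AE x in M. nn Y x \<le> nn (Zs k) x" using nY AGP
    proof eventually_elim
      case (elim w) then show ?case using m_le[OF elim(2), of k] unfolding r_def by linarith
    qed
  qed
  have IY: "I Y \<le> \<mu>"
  proof (rule ccontr)
    assume "\<not> I Y \<le> \<mu>"
    then have "0 < I Y - \<mu>" by simp
    then obtain k :: nat where "1 / Suc k < I Y - \<mu>" by (metis nat_approx_posE)
    then show False using IYk[of k] Zs(2)[of k] by linarith
  qed
  have opt: "AE w in M. nn Y w \<le> nn Z w" if Z: "Z \<in> ?L" for Z
  proof -
    define A where "A = {w \<in> space M. nn Z w < nn Y w}"
    have AG: "A \<in> sets G" unfolding A_def space_G[symmetric] by measurable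
    let ?P = "\<lambda>w. if w \<in> A then Z w else Y w"
    have PL: "?P \<in> ?L" using paste(1)[OF Z YL AG] .
    have nP: "AE w in M. nn ?P w \<le> (if w \<in> A then nn Z w else nn Y w)" using paste(2)[OF Z YL AG] .
    have intmin: "integrable M (\<lambda>w. min (nn Y w) (nn Z w))" using nint[OF YL] nint[OF Z] by auto
    have "\<mu> \<le> I ?P" unfolding \<mu>_def by (rule cINF_lower[OF bddI PL])
    also have "\<dots> \<le> (\<integral>w. min (nn Y w) (nn Z w) \<partial>M)" unfolding I_def
    proof (rule integral_mono_AE[OF nint[OF PL] intmin])
      show "AE w in M. nn ?P w \<le> min (nn Y w) (nn Z w)" using nP AE_space
      proof eventually_elim
        case (elim w) then show ?case unfolding A_def by (auto split: if_splits)
      qed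
    qed
    finally have le: "I Y \<le> (\<integral>w. min (nn Y w) (nn Z w) \<partial>M)" using IY by linarith
    have intd: "integrable M (\<lambda>w. nn Y w - min (nn Y w) (nn Z w))" using nint[OF YL] intmin by auto
    have "(\<integral>w. nn Y w - min (nn Y w) (nn Z w) \<partial>M) = I Y - (\<integral>w. min (nn Y w) (nn Z w) \<partial>M)"
      unfolding I_def using nint[OF YL] intmin by (rule Bochner_Integration.integral_diff)
    also have "\<dots> \<le> 0" using le by simp
    finally have i0: "(\<integral>w. nn Y w - min (nn Y w) (nn Z w) \<partial>M) \<le> 0" .
    have nn0: "AE w in M. 0 \<le> nn Y w - min (nn Y w) (nn Z w)" by (intro AE_I2) simp
    have "(\<integral>w. nn Y w - min (nn Y w) (nn Z w) \<partial>M) = 0"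
      using i0 integral_nonneg_AE[OF nn0] by linarith
    then have "AE w in M. nn Y w - min (nn Y w) (nn Z w) = 0"
      using integral_nonneg_eq_0_iff_AE[OF intd nn0] by blast
    then show ?thesis by eventually_elim auto
  qed
  show ?thesis using YL opt by blast
qed

lemma condE_nonempty: "\<exists>Y. Y \<in> condE M nabs X G"
  using existence unfolding condE_def nn_def by blast

end



theorem mainTheorem13:
  fixes M G :: "'w measure" and nabs :: "'k::{field,metric_space} \<Rightarrow> real"
    and X Y :: "'w \<Rightarrow> 'k"
  assumes "local_field_abs nabs"
    and "prob_space M"
    and "subalgebra M G"
    and "X \<in> Linf M nabs M"
  shows "Y \<in> condE M nabs X G \<longleftrightarrow>
           (Y \<in> Linf M nabs G \<and> (AE w in M. nabs (X w - Y w) \<le> eps_cond M nabs X G w))"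
proof -
  have "mainctx nabs M G X"
    using assms by (simp add: mainctx_def mainctx_axioms_def nafield_def csup_def csup_axioms_def)
  then interpret mainctx nabs M G X .
  define Y0 where "Y0 = (SOME Y. Y \<in> condE M nabs X G)"
  have Y0: "Y0 \<in> condE M nabs X G" unfolding Y0_def using condE_nonempty by (rule someI_ex)
  have eps: "eps_cond M nabs X G = nn Y0" unfolding eps_cond_def nn_def Y0_def ..
  have Y0L: "Y0 \<in> Linf M nabs G" and Y0opt: "\<And>Z. Z \<in> Linf M nabs G \<Longrightarrow> AE w in M. nn Y0 w \<le> nn Z w"
    using Y0 unfolding condE_def nn_def by auto
  show ?thesis
  proof
    assume Y: "Y \<in> condE M nabs X G"
    then have YL: "Y \<in> Linf M nabs G" and Yopt: "\<And>Z. Z \<in> Linf M nabs G \<Longrightarrow> AE w in M. nn Y w \<le> nn Z w"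
      unfolding condE_def nn_def by auto
    have "AE w in M. nabs (X w - Y w) \<le> eps_cond M nabs X G w"
      using Yopt[OF Y0L] nF2[OF YL] unfolding eps by eventually_elim auto
    then show "Y \<in> Linf M nabs G \<and> (AE w in M. nabs (X w - Y w) \<le> eps_cond M nabs X G w)"
      using YL by blast
  next
    assume "Y \<in> Linf M nabs G \<and> (AE w in M. nabs (X w - Y w) \<le> eps_cond M nabs X G w)"
    then have YL: "Y \<in> Linf M nabs G" and Yb: "AE w in M. nabs (X w - Y w) \<le> nn Y0 w"
      unfolding eps by auto
    have YY0: "AE w in M. nn Y w \<le> nn Y0 w" by (rule nF3[OF YL nF1 Yb])
    have "\<forall>Z\<in>Linf M nabs G. AE w in M. nn Y w \<le> nn Z w"
    proof
      fix Z assume "Z \<in> Linf M nabs G"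
      from YY0 Y0opt[OF this] show "AE w in M. nn Y w \<le> nn Z w" by eventually_elim auto
    qed
    then show "Y \<in> condE M nabs X G" using YL unfolding condE_def nn_def by blast
  qed
qed


end
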